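(* Let $\beta>0$, $\rho>0$, $\xi>0$, let $f,c_i$ ($i\in\mathcal I=\{1,\dots,m\}$) be continuously differentiable, and let $z_k=(x_k,u_k)$, $H_k$ a symmetric $n\times n$ matrix, and $d_k^c\in\mathbb{R}^{n+m}$ given, with $d_k^c=0$ whenever $r_k=0$. Let $d_k=(d_{xk},d_{uk})$ be an optimal solution of $$\min_{d}\ \hat q_k(d)=\rho\nabla f_k^Td_x+\sum_{i}\frac{\rho\beta}{y_{ki}+\lambda_{ki}}(\nabla c_{ki}^Td_x+\rho d_{ui})+\tfrac12d_x^TH_kd_x+\tfrac12\sum_i\frac{\rho\beta}{(y_{ki}+\lambda_{ki})^2}(\nabla c_{ki}^Td_x+\rho d_{ui})^2\quad\text{s.t.}\quad R_k^Td=R_k^Td_k^c.$$ Let $\Phi_\xi'(z_k;d_k)$ denote the directional derivative of $z\mapsto\Phi_\xi(z;\beta,\rho)$ at $z_k$ along $d_k$. Then: (1) $\Phi'_\xi(z_k;d_k)\le\xi\Big(\rho\nabla f_k^Td_{xk}+\sum_i\frac{\rho\beta}{y_{ki}+\lambda_{ki}}(\nabla c_{ki}^Td_{xk}+\rho d_{uki})\Big)+\|r_k+R_k^Td_k\|-\|r_k\|$. (2) If $r_k=0$, then $\Phi'_\xi(z_k;d_k)\le-\tfrac12\xi\,d_k^TQ_kd_k$.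
   Context: Notation: $y_i(x,u;\beta,\rho)=\tfrac12[\sqrt{(c_i(x)+\rho u_i)^2+4\rho\beta}-(c_i(x)+\rho u_i)]$, $\lambda_i(x,u;\beta,\rho)=\tfrac12[\sqrt{(c_i(x)+\rho u_i)^2+4\rho\beta}+(c_i(x)+\rho u_i)]$; $y_{ki},\lambda_{ki}$ are their values at $(x_k,u_k)$; $c_{ki}=c_i(x_k)$, $\nabla c_{ki}=\nabla c_i(x_k)$, $\nabla f_k=\nabla f(x_k)$. The merit function is $\Phi_\xi(x,u;\beta,\rho)=\xi\rho f(x)-\xi\rho\beta\sum_i\ln y_i(x,u;\beta,\rho)+\|c(x)+y(x,u;\beta,\rho)\|$ (Euclidean norm). $r_k=c(x_k)+y(x_k,u_k;\beta,\rho)\in\mathbb{R}^m$. $R_k$ is the $(n+m)\times m$ matrix whose $i$th column is $\big(\tfrac{\lambda_{ki}}{y_{ki}+\lambda_{ki}}\nabla c_{ki};\,-\rho\tfrac{y_{ki}}{y_{ki}+\lambda_{ki}}e_i\big)$, $e_i$ the $i$th unit vector in $\mathbb{R}^m$. $Q_k$ is the symmetric matrix such that $d^TQ_kd=d_x^TH_kd_x+\sum_i\frac{\rho\beta}{(y_{ki}+\lambda_{ki})^2}(\nabla c_{ki}^Td_x+\rho d_{ui})^2$, namely $Q_k=\begin{pmatrix}H_k+\sum_i w_{ki}\nabla c_{ki}\nabla c_{ki}^T & G_k\\ G_k^T&\mathrm{diag}(\rho^2w_{ki})\end{pmatrix}$ with $w_{ki}=\rho\beta/(y_{ki}+\lambda_{ki})^2$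 and $G_k$ having columns $\rho w_{ki}\nabla c_{ki}$. *)

theory Defs
  imports "HOL-Analysis.Analysis"
begin

definition yv :: "real \<Rightarrow> real \<Rightarrow> real \<Rightarrow> real \<Rightarrow> real" where
  "yv \<beta> \<rho> ci ui = (sqrt ((ci + \<rho> * ui)^2 + 4 * \<rho> * \<beta>) - (ci + \<rho> * ui)) / 2"

definition lv :: "real \<Rightarrow> real \<Rightarrow> real \<Rightarrow> real \<Rightarrow> real" where
  "lv \<beta> \<rho> ci ui = (sqrt ((ci + \<rho> * ui)^2 + 4 * \<rho> * \<beta>) + (ci + \<rho> * ui)) / 2"

definition merit :: "real \<Rightarrow> real \<Rightarrow> real \<Rightarrow> (real^'n \<Rightarrow> real) \<Rightarrow> ('m::finite \<Rightarrow> real^'n \<Rightarrow> real)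
    \<Rightarrow> (real^'n) \<times> (real^'m) \<Rightarrow> real" where
  "merit \<xi> \<beta> \<rho> f c z = (case z of (x, u) \<Rightarrow>
      \<xi> * \<rho> * f x - \<xi> * \<rho> * \<beta> * (\<Sum>i\<in>UNIV. ln (yv \<beta> \<rho> (c i x) (u $ i)))
      + norm (\<chi> i. c i x + yv \<beta> \<rho> (c i x) (u $ i)))"

definition has_dir_deriv :: "('a::real_normed_vector \<Rightarrow> real) \<Rightarrow> 'a \<Rightarrow> 'a \<Rightarrow> real \<Rightarrow> bool" where
  "has_dir_deriv F z d D \<longleftrightarrow> ((\<lambda>t. (F (z + t *\<^sub>R d) - F z) / t) \<longlongrightarrow> D) (at_right 0)"

text \<open>Data at the iterate: ck i = c_i(x_k), gck i = grad c_i(x_k), gfk = grad f(x_k).\<close>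

definition rvec :: "real \<Rightarrow> real \<Rightarrow> ('m::finite \<Rightarrow> real) \<Rightarrow> real^'m \<Rightarrow> real^'m" where
  "rvec \<beta> \<rho> ck uk = (\<chi> i. ck i + yv \<beta> \<rho> (ck i) (uk $ i))"

definition RTd :: "real \<Rightarrow> real \<Rightarrow> ('m::finite \<Rightarrow> real) \<Rightarrow> ('m \<Rightarrow> real^'n) \<Rightarrow> real^'m
    \<Rightarrow> (real^'n) \<times> (real^'m) \<Rightarrow> real^'m" where
  "RTd \<beta> \<rho> ck gck uk d = (\<chi> i.
      let y = yv \<beta> \<rho> (ck i) (uk $ i); l = lv \<beta> \<rho> (ck i) (uk $ i) in
      (l / (y + l)) * (gck i \<bullet> fst d) - \<rho> * (y / (y + l)) * (snd d $ i))"

definition linq :: "real \<Rightarrow> real \<Rightarrow> real^'n \<Rightarrow> ('m::finite \<Rightarrow> real) \<Rightarrow> ('m \<Rightarrow> real^'n) \<Rightarrow> real^'m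
    \<Rightarrow> (real^'n) \<times> (real^'m) \<Rightarrow> real" where
  "linq \<beta> \<rho> gfk ck gck uk d = \<rho> * (gfk \<bullet> fst d) +
     (\<Sum>i\<in>UNIV. \<rho> * \<beta> / (yv \<beta> \<rho> (ck i) (uk $ i) + lv \<beta> \<rho> (ck i) (uk $ i))
        * (gck i \<bullet> fst d + \<rho> * snd d $ i))"

definition quadQ :: "real \<Rightarrow> real \<Rightarrow> real^'n^'n \<Rightarrow> ('m::finite \<Rightarrow> real) \<Rightarrow> ('m \<Rightarrow> real^'n) \<Rightarrow> real^'m
    \<Rightarrow> (real^'n) \<times> (real^'m) \<Rightarrow> real" where
  "quadQ \<beta> \<rho> H ck gck uk d = fst d \<bullet> (H *v fst d) +
     (\<Sum>i\<in>UNIV. \<rho> * \<beta> / (yv \<beta> \<rho> (ck i) (uk $ i) + lv \<beta> \<rho> (ck i) (uk $ i))^2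
        * (gck i \<bullet> fst d + \<rho> * snd d $ i)^2)"

definition qhat :: "real \<Rightarrow> real \<Rightarrow> real^'n \<Rightarrow> real^'n^'n \<Rightarrow> ('m::finite \<Rightarrow> real) \<Rightarrow> ('m \<Rightarrow> real^'n)
    \<Rightarrow> real^'m \<Rightarrow> (real^'n) \<times> (real^'m) \<Rightarrow> real" where
  "qhat \<beta> \<rho> gfk H ck gck uk d = linq \<beta> \<rho> gfk ck gck uk d + quadQ \<beta> \<rho> H ck gck uk d / 2"

end

theory Submission imports Defs begin

lemma sqrt_gt_abs: "(b::real) > 0 \<Longrightarrow> sqrt (s^2 + b) > \<bar>s\<bar>"
  by (metis add.commute less_add_same_cancel2 real_sqrt_abs real_sqrt_less_iff)

lemma yv_pos: "\<beta> > 0 \<Longrightarrow> \<rho> > 0 \<Longrightarrow> yv \<beta> \<rho> a b > 0"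
  unfolding yv_def using sqrt_gt_abs[of "4*\<rho>*\<beta>" "a + \<rho>*b"] by auto

lemma yl_sum: "yv \<beta> \<rho> a b + lv \<beta> \<rho> a b = sqrt ((a + \<rho> * b)^2 + 4 * \<rho> * \<beta>)"
  unfolding yv_def lv_def by (simp add: field_simps)

lemma yv_deriv:
  assumes "(ci has_real_derivative a) (at 0)" "(ui has_real_derivative b) (at 0)" "\<beta> > 0" "\<rho> > 0"
  shows "((\<lambda>t. yv \<beta> \<rho> (ci t) (ui t)) has_real_derivative
     (- yv \<beta> \<rho> (ci 0) (ui 0) / (yv \<beta> \<rho> (ci 0) (ui 0) + lv \<beta> \<rho> (ci 0) (ui 0)) * (a + \<rho> * b))) (at 0)"
proof -
  define s where "s = ci 0 + \<rho> * ui 0"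
  define S where "S = sqrt (s^2 + 4*\<rho>*\<beta>)"
  have Spos: "S > 0" unfolding S_def using assms by (intro real_sqrt_gt_zero) (simp add: add_nonneg_pos)
  have sp: "s^2 + 4*\<rho>*\<beta> > 0" using assms by (simp add: add_nonneg_pos)
  have p: "((\<lambda>t. ci t + \<rho> * ui t) has_real_derivative (a + \<rho> * b)) (at 0)"
    using assms by (intro DERIV_add DERIV_cmult) auto
  have q: "((\<lambda>t. (ci t + \<rho> * ui t)^2 + 4*\<rho>*\<beta>) has_real_derivative (2 * s * (a + \<rho> * b))) (at 0)"
    using DERIV_add[OF DERIV_power[OF p, of 2] DERIV_const[of "4*\<rho>*\<beta>"]] unfolding s_def by (simp add: algebra_simps)
  have r: "((\<lambda>t. sqrt ((ci t + \<rho> * ui t)^2 + 4*\<rho>*\<beta>)) has_real_derivative (inverse S / 2 * (2 * s * (a + \<rho> * b)))) (at 0)"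
    using DERIV_chain2[OF DERIV_real_sqrt q] sp unfolding S_def s_def by simp
  have "((\<lambda>t. (sqrt ((ci t + \<rho> * ui t)^2 + 4 * \<rho> * \<beta>) - (ci t + \<rho> * ui t)) / 2) has_real_derivative
     ((inverse S / 2 * (2 * s * (a + \<rho> * b)) - (a + \<rho>*b)) / 2)) (at 0)"
    by (intro DERIV_cdivide DERIV_diff r p)
  moreover have "(inverse S / 2 * (2 * s * (a + \<rho> * b)) - (a + \<rho>*b)) / 2
     = - ((S - s)/2) / S * (a + \<rho> * b)"
    using Spos by (simp add: field_simps)
  ultimately show ?thesis unfolding yl_sum unfolding yv_def S_def s_def by (simp add: mult.commute)
qed

lemma deriv_right_quot:
  assumes "(g has_real_derivative D) (at 0)"
  shows "((\<lambda>t. (g t - g 0) / t) \<longlongrightarrow> D) (at_right 0)"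
proof -
  have "((\<lambda>h. (g (0 + h) - g 0) / h) \<longlongrightarrow> D) (at 0)" using assms unfolding DERIV_def .
  then have "((\<lambda>h. (g h - g 0) / h) \<longlongrightarrow> D) (at 0)" by simp
  then show ?thesis by (rule tendsto_mono[rotated]) (simp add: at_le)
qed

lemma inv_half_two: "inverse (n::real) / 2 * (2 * x) = x / n"
  by (simp add: field_simps)

lemma norm_vec_sqrt: "norm (x::real^'m) = sqrt (\<Sum>i\<in>UNIV. (x$i)^2)"
  unfolding norm_vec_def L2_set_def by simp

lemma norm_dir_bound:
  fixes r v :: "real^'m"
  assumes "r \<noteq> 0"
  shows "(r \<bullet> v) / norm r \<le> norm (r + v) - norm r"
proof -
  have np: "norm r > 0" using assms by simp
  have "r \<bullet> (r + v) \<le> norm r * norm (r + v)" by (rule norm_cauchy_schwarz)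
  then have "norm r ^2 + r \<bullet> v \<le> norm r * norm (r + v)"
    by (simp add: inner_add_right power2_norm_eq_inner)
  then show ?thesis using np by (simp add: field_simps power2_eq_square)
qed
theorem lemma3p2:
  fixes \<beta> \<rho> \<xi> :: real
    and f :: "real^'n \<Rightarrow> real" and gf :: "real^'n \<Rightarrow> real^'n"
    and c :: "'m::finite \<Rightarrow> real^'n \<Rightarrow> real" and gc :: "'m \<Rightarrow> real^'n \<Rightarrow> real^'n"
    and xk :: "real^'n" and uk :: "real^'m" and H :: "real^'n^'n"
    and dc dk :: "(real^'n) \<times> (real^'m)"
  assumes "\<beta> > 0" and "\<rho> > 0" and "\<xi> > 0"
    and f_C1: "\<And>x. (f has_derivative (\<lambda>h. gf x \<bullet> h)) (at x)" "continuous_on UNIV gf"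
    and c_C1: "\<And>i x. (c i has_derivative (\<lambda>h. gc i x \<bullet> h)) (at x)" "\<And>i. continuous_on UNIV (gc i)"
    and H_sym: "transpose H = H"
    and dc_zero: "rvec \<beta> \<rho> (\<lambda>i. c i xk) uk = 0 \<Longrightarrow> dc = 0"
    and dk_feas: "RTd \<beta> \<rho> (\<lambda>i. c i xk) (\<lambda>i. gc i xk) uk dk = RTd \<beta> \<rho> (\<lambda>i. c i xk) (\<lambda>i. gc i xk) uk dc"
    and dk_opt: "\<And>d. RTd \<beta> \<rho> (\<lambda>i. c i xk) (\<lambda>i. gc i xk) uk d = RTd \<beta> \<rho> (\<lambda>i. c i xk) (\<lambda>i. gc i xk) uk dc
        \<Longrightarrow> qhat \<beta> \<rho> (gf xk) H (\<lambda>i. c i xk) (\<lambda>i. gc i xk) uk dk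
            \<le> qhat \<beta> \<rho> (gf xk) H (\<lambda>i. c i xk) (\<lambda>i. gc i xk) uk d"
  shows "\<exists>D. has_dir_deriv (merit \<xi> \<beta> \<rho> f c) (xk, uk) dk D
     \<and> D \<le> \<xi> * linq \<beta> \<rho> (gf xk) (\<lambda>i. c i xk) (\<lambda>i. gc i xk) uk dk
            + norm (rvec \<beta> \<rho> (\<lambda>i. c i xk) uk + RTd \<beta> \<rho> (\<lambda>i. c i xk) (\<lambda>i. gc i xk) uk dk)
            - norm (rvec \<beta> \<rho> (\<lambda>i. c i xk) uk)
     \<and> (rvec \<beta> \<rho> (\<lambda>i. c i xk) uk = 0 \<longrightarrow>
          D \<le> - (1/2) * \<xi> * quadQ \<beta> \<rho> H (\<lambda>i. c i xk) (\<lambda>i. gc i xk) uk dk)"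
proof -
  obtain dx du where dk: "dk = (dx, du)" by (cases dk)
  define C where "C i t = c i (xk + t *\<^sub>R dx)" for i t
  define U where "U i t = uk $ i + t * du $ i" for i t
  define Y where "Y i t = yv \<beta> \<rho> (C i t) (U i t)" for i t
  define Lv where "Lv i = lv \<beta> \<rho> (c i xk) (uk $ i)" for i
  define y0 where "y0 i = yv \<beta> \<rho> (c i xk) (uk $ i)" for i
  define a where "a i = gc i xk \<bullet> dx" for i
  define sg where "sg i = a i + \<rho> * du $ i" for i
  define vv where "vv i = a i - y0 i / (y0 i + Lv i) * sg i" for i
  define W where "W i t = C i t + Y i t" for i t
  define A where "A t = \<xi> * \<rho> * f (xk + t *\<^sub>R dx) - \<xi> * \<rho> * \<beta> * (\<Sum>i\<in>UNIV. ln (Y i t))" for t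
  define L where "L = linq \<beta> \<rho> (gf xk) (\<lambda>i. c i xk) (\<lambda>i. gc i xk) uk dk"
  define Q where "Q = quadQ \<beta> \<rho> H (\<lambda>i. c i xk) (\<lambda>i. gc i xk) uk dk"
  define r where "r = rvec \<beta> \<rho> (\<lambda>i. c i xk) uk"
  define v where "v = RTd \<beta> \<rho> (\<lambda>i. c i xk) (\<lambda>i. gc i xk) uk dk"
  have C0: "C i 0 = c i xk" for i by (simp add: C_def)
  have U0: "U i 0 = uk $ i" for i by (simp add: U_def)
  have Y0: "Y i 0 = y0 i" for i by (simp add: Y_def C0 U0 y0_def)
  have ypos: "y0 i > 0" for i unfolding y0_def using yv_pos assms(1,2) by blast
  have slpos: "y0 i + Lv i > 0" for i
    unfolding y0_def Lv_def yl_sum using assms(1,2) by (intro real_sqrt_gt_zero) (simp add: add_nonneg_pos)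
  have r_eq: "r = (\<chi> i. W i 0)" unfolding r_def rvec_def W_def C0 Y0 y0_def by simp
  have v_eq: "v = (\<chi> i. vv i)"
  proof -
    have "Lv i / (y0 i + Lv i) * a i - \<rho> * (y0 i / (y0 i + Lv i)) * du $ i = vv i" for i
      using slpos[of i] unfolding vv_def sg_def by (simp add: divide_simps) (simp add: algebra_simps)
    then show ?thesis unfolding v_def RTd_def dk Let_def y0_def[symmetric] Lv_def[symmetric]
      by (simp add: a_def fun_eq_iff)
  qed
  have hx: "((\<lambda>t. xk + t *\<^sub>R dx) has_derivative (\<lambda>t. t *\<^sub>R dx)) (at 0)"
    by (auto intro!: derivative_eq_intros)
  have hC: "(C i has_real_derivative a i) (at 0)" for i
  proof -
    have "((\<lambda>t. c i (xk + t *\<^sub>R dx)) has_derivative (\<lambda>h. gc i xk \<bullet> (h *\<^sub>R dx))) (at 0)"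
      using has_derivative_compose[OF hx, of "c i" "\<lambda>h. gc i xk \<bullet> h"] c_C1(1)[of i xk] by simp
    moreover have "(\<lambda>h. gc i xk \<bullet> (h *\<^sub>R dx)) = (*) (a i)"
      by (simp add: fun_eq_iff a_def mult.commute)
    ultimately show ?thesis unfolding has_field_derivative_def C_def by simp
  qed
  have hf: "((\<lambda>t. f (xk + t *\<^sub>R dx)) has_real_derivative gf xk \<bullet> dx) (at 0)"
  proof -
    have "((\<lambda>t. f (xk + t *\<^sub>R dx)) has_derivative (\<lambda>h. gf xk \<bullet> (h *\<^sub>R dx))) (at 0)"
      using has_derivative_compose[OF hx, of "f" "\<lambda>h. gf xk \<bullet> h"] f_C1(1)[of xk] by simp
    moreover have "(\<lambda>h. gf xk \<bullet> (h *\<^sub>R dx)) = (*) (gf xk \<bullet> dx)"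
      by (simp add: fun_eq_iff mult.commute)
    ultimately show ?thesis unfolding has_field_derivative_def by simp
  qed
  have hU: "(U i has_real_derivative du $ i) (at 0)" for i
    unfolding U_def by (auto intro!: derivative_eq_intros)
  have hY: "(Y i has_real_derivative (- y0 i / (y0 i + Lv i) * sg i)) (at 0)" for i
    using yv_deriv[OF hC hU assms(1,2)] unfolding Y_def C0 U0 y0_def Lv_def sg_def by simp
  have hW: "(W i has_real_derivative vv i) (at 0)" for i
    unfolding W_def[abs_def] vv_def using DERIV_add[OF hC hY] by simp
  have hA: "(A has_real_derivative \<xi> * L) (at 0)"
  proof -
    have hl: "((\<lambda>t. ln (Y i t)) has_real_derivative inverse (y0 i) * (- y0 i / (y0 i + Lv i) * sg i)) (at 0)" for i
      using DERIV_chain2[OF DERIV_ln[OF ypos[of i, folded Y0]] hY[of i]] unfolding Y0 by simp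
    have "(A has_real_derivative \<xi> * \<rho> * (gf xk \<bullet> dx) - \<xi> * \<rho> * \<beta> *
        (\<Sum>i\<in>UNIV. inverse (y0 i) * (- y0 i / (y0 i + Lv i) * sg i))) (at 0)"
      unfolding A_def[abs_def] by (intro DERIV_diff DERIV_cmult hf DERIV_sum hl)
    moreover have "\<xi> * \<rho> * (gf xk \<bullet> dx) - \<xi> * \<rho> * \<beta> *
        (\<Sum>i\<in>UNIV. inverse (y0 i) * (- y0 i / (y0 i + Lv i) * sg i)) = \<xi> * L"
    proof -
      have e1: "inverse (y0 i) * (- y0 i / (y0 i + Lv i) * sg i) = - (sg i / (y0 i + Lv i))" for i
        using ypos[of i] by (simp add: field_simps)
      have e2: "\<rho> * \<beta> / (y0 i + Lv i) * sg i = \<rho> * \<beta> * (sg i / (y0 i + Lv i))" for i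
        by simp
      have "\<xi> * \<rho> * \<beta> * (\<Sum>i\<in>UNIV. inverse (y0 i) * (- y0 i / (y0 i + Lv i) * sg i))
          = - \<xi> * (\<Sum>i\<in>UNIV. \<rho> * \<beta> / (y0 i + Lv i) * sg i)"
        unfolding e1 e2 sum_negf sum_distrib_left[symmetric] by (simp only: algebra_simps)
      then show ?thesis unfolding L_def linq_def dk y0_def[symmetric] Lv_def[symmetric] sg_def a_def
        by (simp add: algebra_simps)
    qed
    ultimately show ?thesis by simp
  qed
  have G: "merit \<xi> \<beta> \<rho> f c ((xk, uk) + t *\<^sub>R dk) = A t + norm (\<chi> i. W i t)" for t
    unfolding merit_def dk A_def W_def Y_def C_def U_def by simp
  define F where "F = merit \<xi> \<beta> \<rho> f c"
  define N where "N t = norm (\<chi> i. W i t)" for t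
  have Gz: "F (xk, uk) = A 0 + N 0" using G[of 0] unfolding F_def N_def by simp
  have quot: "(F ((xk, uk) + t *\<^sub>R dk) - F (xk, uk)) / t = (A t - A 0) / t + (N t - N 0) / t" for t
  proof -
    have "(F ((xk, uk) + t *\<^sub>R dk) - F (xk, uk)) / t = ((A t - A 0) + (N t - N 0)) / t"
      using G[of t] Gz unfolding F_def N_def by simp
    also have "\<dots> = (A t - A 0) / t + (N t - N 0) / t" by (rule add_divide_distrib)
    finally show ?thesis .
  qed
  have Aq: "((\<lambda>t. (A t - A 0) / t) \<longlongrightarrow> \<xi> * L) (at_right 0)" by (rule deriv_right_quot[OF hA])
  have RT0: "RTd \<beta> \<rho> (\<lambda>i. c i xk) (\<lambda>i. gc i xk) uk 0 = 0"
    unfolding RTd_def by (simp add: Let_def vec_eq_iff)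
  show ?thesis
  proof (cases "r = 0")
    case True
    have dc0: "dc = 0" using dc_zero True unfolding r_def by blast
    have v0: "v = 0" unfolding v_def using dk_feas dc0 RT0 by simp
    have "qhat \<beta> \<rho> (gf xk) H (\<lambda>i. c i xk) (\<lambda>i. gc i xk) uk dk
        \<le> qhat \<beta> \<rho> (gf xk) H (\<lambda>i. c i xk) (\<lambda>i. gc i xk) uk 0"
      by (rule dk_opt) (simp add: dc0 RT0)
    moreover have "qhat \<beta> \<rho> (gf xk) H (\<lambda>i. c i xk) (\<lambda>i. gc i xk) uk 0 = 0"
      unfolding qhat_def linq_def quadQ_def by simp
    ultimately have LQ: "L + Q / 2 \<le> 0" unfolding qhat_def L_def Q_def by simp
    have W0: "W i 0 = 0" for i using True r_eq by (simp add: vec_eq_iff)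
    have hq: "((\<lambda>h. W i h / h) \<longlongrightarrow> vv i) (at 0)" for i
      using hW[of i] unfolding DERIV_def by (simp add: W0)
    have "((\<lambda>h. \<chi> i. W i h / h) \<longlongrightarrow> (\<chi> i. vv i)) (at 0)"
      by (rule tendsto_vec_lambda[OF hq])
    then have "((\<lambda>h. \<chi> i. W i h / h) \<longlongrightarrow> (\<chi> i. vv i)) (at_right 0)"
      by (rule tendsto_mono[rotated]) (simp add: at_le)
    then have "((\<lambda>h. norm (\<chi> i. W i h / h)) \<longlongrightarrow> norm v) (at_right 0)"
      unfolding v_eq by (rule tendsto_norm)
    moreover have "\<forall>\<^sub>F h in at_right 0. norm (\<chi> i. W i h / h) = (N h - N 0) / h"
    proof (rule eventually_at_rightI[of 0 1])
      fix h :: real assume "h \<in> {0<..<1}"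
      then have hp: "h > 0" by simp
      have "(\<chi> i. W i h / h) = (1 / h) *\<^sub>R (\<chi> i. W i h)" by (simp add: vec_eq_iff)
      moreover have "N 0 = 0" unfolding N_def W0 by (simp add: vec_eq_iff)
      ultimately show "norm (\<chi> i. W i h / h) = (N h - N 0) / h"
        using hp unfolding N_def by simp
    qed simp
    ultimately have Nq: "((\<lambda>h. (N h - N 0) / h) \<longlongrightarrow> norm v) (at_right 0)"
      by (rule Lim_transform_eventually)
    have "has_dir_deriv F (xk, uk) dk (\<xi> * L + norm v)"
      unfolding has_dir_deriv_def quot by (intro tendsto_add Aq Nq)
    moreover have "\<xi> * L \<le> - (1/2) * \<xi> * Q"
    proof -
      have "\<xi> * (L + Q/2) \<le> 0" using LQ assms(3) by (simp add: mult_nonneg_nonpos)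
      then show ?thesis by (simp add: algebra_simps)
    qed
    ultimately have "\<exists>D. has_dir_deriv F (xk, uk) dk D \<and> D \<le> \<xi> * L + norm (r + v) - norm r
       \<and> (r = 0 \<longrightarrow> D \<le> - (1/2) * \<xi> * Q)"
      using True v0 by (intro exI[of _ "\<xi> * L + norm v"]) simp
    then show ?thesis unfolding F_def L_def Q_def r_def v_def .
  next
    case False
    have Nsq: "N t = sqrt (\<Sum>i\<in>UNIV. (W i t)^2)" for t unfolding N_def norm_vec_sqrt by simp
    have rn: "norm r = sqrt (\<Sum>i\<in>UNIV. (W i 0)^2)" using Nsq[of 0] r_eq N_def by simp
    have Spos: "(\<Sum>i\<in>UNIV. (W i 0)^2) > 0"
    proof -
      have "norm r > 0" using False by simp
      then show ?thesis unfolding rn by simp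
    qed
    have hs: "((\<lambda>t. \<Sum>i\<in>UNIV. (W i t)^2) has_real_derivative (\<Sum>i\<in>UNIV. 2 * (vv i * W i 0))) (at 0)"
      by (rule DERIV_sum) (use DERIV_power[OF hW, of _ 2] in simp)
    have "(N has_real_derivative inverse (sqrt (\<Sum>i\<in>UNIV. (W i 0)^2)) / 2 * (\<Sum>i\<in>UNIV. 2 * (vv i * W i 0))) (at 0)"
      unfolding Nsq[abs_def] by (rule DERIV_chain2[OF DERIV_real_sqrt[OF Spos] hs])
    moreover have "inverse (sqrt (\<Sum>i\<in>UNIV. (W i 0)^2)) / 2 * (\<Sum>i\<in>UNIV. 2 * (vv i * W i 0)) = (r \<bullet> v) / norm r"
    proof -
      have e1: "r \<bullet> v = (\<Sum>i\<in>UNIV. vv i * W i 0)" unfolding r_eq v_eq inner_vec_def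
        by (simp add: mult.commute)
      have e2: "(\<Sum>i\<in>UNIV. 2 * (vv i * W i 0)) = 2 * (\<Sum>i\<in>UNIV. vv i * W i 0)"
        by (simp add: sum_distrib_left)
      have "inverse (sqrt (\<Sum>i\<in>UNIV. (W i 0)^2)) / 2 * (\<Sum>i\<in>UNIV. 2 * (vv i * W i 0))
          = inverse (norm r) / 2 * (2 * (\<Sum>i\<in>UNIV. vv i * W i 0))" unfolding rn e2 ..
      also have "\<dots> = (\<Sum>i\<in>UNIV. vv i * W i 0) / norm r" by (rule inv_half_two)
      finally show ?thesis unfolding e1 .
    qed
    ultimately have "(N has_real_derivative (r \<bullet> v) / norm r) (at 0)" by simp
    then have Nq: "((\<lambda>h. (N h - N 0) / h) \<longlongrightarrow> (r \<bullet> v) / norm r) (at_right 0)"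
      by (rule deriv_right_quot)
    have "has_dir_deriv F (xk, uk) dk (\<xi> * L + (r \<bullet> v) / norm r)"
      unfolding has_dir_deriv_def quot by (intro tendsto_add Aq Nq)
    moreover have "(r \<bullet> v) / norm r \<le> norm (r + v) - norm r" by (rule norm_dir_bound[OF False])
    ultimately have "\<exists>D. has_dir_deriv F (xk, uk) dk D \<and> D \<le> \<xi> * L + norm (r + v) - norm r
       \<and> (r = 0 \<longrightarrow> D \<le> - (1/2) * \<xi> * Q)"
      using False by (intro exI[of _ "\<xi> * L + (r \<bullet> v) / norm r"]) simp
    then show ?thesis unfolding F_def L_def Q_def r_def v_def .
  qed
qed

end
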